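(* Assume the block-sparse setting described in the context, with adversarial noise satisfying $\|w\|_2\le\varepsilon$ for a known constant $\varepsilon>0$, and assume $x\neq 0$. Suppose that $$(1-(d-1)\nu)\,x_{\min} > 2\varepsilon\sqrt{1+(d-1)\nu} + (2k-1)\,d\,\mu_B\,x_{\max}.$$ Then the block-thresholding (BTH) estimate satisfies $S\subseteq \hat S$ (i.e., BTH identifies all elements of the support of $x$), and $$\|\hat x_{\mathrm{BTH}}-x\|_2^2 \le \frac{\varepsilon^2}{1-(d-1)\nu-(k-1)d\mu_B}.$$
   Context: Setting: $N=Md$. For $v\in\mathbb{C}^N$, $v[i]=(v_{(i-1)d+1},\dots,v_{id})^T$ is its $i$-th block ($1\le i\le M$); for a matrix $A$ with $N$ columns, $A[i]$ is the submatrix of columns $(i-1)d+1,\dots,id$. The (block) support is $\mathrm{supp}(v)=\{i: v[i]\neq 0\}$. For an index set $I=\{i_1<\dots<i_p\}$, $v_I$ is the concatenation of the blocks $v[i_1],\dots,v[i_p]$ and $A_I=[A[i_1],\dots,A[i_p]]$. The unknown deterministic vector $x\in\mathbb{C}^N$ has at most $k$ nonzero blocks (with $k$ known); $S=\mathrm{supp}(x)$, $s=|S|$, $x_{\max}=\max_{i\in S}\|x[i]\|_2$, $x_{\min}=\min_{i\in S}\|x[i]\|_2$. Observations are $y=Dx+w$ where $D\in\mathbb{C}^{L\times N}$ is known with columns $d_1,\dots,d_N$ of unit $\ell_2$ norm, $L<N$, and $D_I$ has full column rank for every index set $I$ with $|I|\le k$. Block coherence: $\mu_B=\max_{i\neq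 j}\frac1d\|D[i]^*D[j]\|$ (spectral norm). Sub-coherence: $\nu=\max_{1\le \ell\le M}\max_{(\ell-1)d+1\le i\neq j\le \ell d}|d_i^*d_j|$. BTH algorithm: compute $\rho_i=\|D[i]^*y\|_2$ for $i=1,\dots,M$; choose a set $\hat S$ of $k$ indices with $\rho_i\ge\rho_j$ for all $i\in\hat S$, $j\notin\hat S$ (ties broken arbitrarily); output $\hat x_{\mathrm{BTH}}$ defined by $(\hat x_{\mathrm{BTH}})_{\hat S}=D_{\hat S}^{\dagger}y$ (least squares on the blocks of $\hat S$) and zero on all other blocks. Here $^\dagger$ is the Moore–Penrose pseudoinverse. *)

theory Defs
  imports Complex_Main
begin

text \<open>Conventions: vectors are functions nat => complex, meaningful on indices below the
dimension; matrices are functions nat => nat => complex (row, column).  Everything is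
0-indexed: block i (i < M) of a vector of length N = M*d consists of entries
i*d, ..., i*d + d - 1.\<close>

definition vnorm :: "nat \<Rightarrow> (nat \<Rightarrow> complex) \<Rightarrow> real" where
  "vnorm n v = sqrt (\<Sum>i<n. (cmod (v i))\<^sup>2)"

definition blk :: "nat \<Rightarrow> (nat \<Rightarrow> complex) \<Rightarrow> nat \<Rightarrow> (nat \<Rightarrow> complex)" where
  "blk d v i = (\<lambda>j. v (i * d + j))"

definition blocknorm :: "nat \<Rightarrow> (nat \<Rightarrow> complex) \<Rightarrow> nat \<Rightarrow> real" where
  "blocknorm d v i = vnorm d (blk d v i)"

definition bsupp :: "nat \<Rightarrow> nat \<Rightarrow> (nat \<Rightarrow> complex) \<Rightarrow> nat set" where
  "bsupp M d v = {i. i < M \<and> (\<exists>j<d. v (i * d + j) \<noteq> 0)}"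

definition matvec :: "nat \<Rightarrow> nat \<Rightarrow> (nat \<Rightarrow> nat \<Rightarrow> complex) \<Rightarrow> (nat \<Rightarrow> complex) \<Rightarrow> (nat \<Rightarrow> complex)" where
  "matvec L N A v = (\<lambda>r. \<Sum>c<N. A r c * v c)"

definition specnorm :: "nat \<Rightarrow> nat \<Rightarrow> (nat \<Rightarrow> nat \<Rightarrow> complex) \<Rightarrow> real" where
  "specnorm m n A = Sup {vnorm m (matvec m n A u) | u. vnorm n u = 1}"

definition blockgram :: "nat \<Rightarrow> nat \<Rightarrow> (nat \<Rightarrow> nat \<Rightarrow> complex) \<Rightarrow> nat \<Rightarrow> nat \<Rightarrow> (nat \<Rightarrow> nat \<Rightarrow> complex)" where
  "blockgram L d D i j = (\<lambda>a b. \<Sum>r<L. cnj (D r (i * d + a)) * D r (j * d + b))"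

text \<open>Block coherence mu_B (convention: 0 if there is only one block).\<close>
definition block_coherence :: "nat \<Rightarrow> nat \<Rightarrow> nat \<Rightarrow> (nat \<Rightarrow> nat \<Rightarrow> complex) \<Rightarrow> real" where
  "block_coherence L M d D =
     Max (insert 0 {specnorm d d (blockgram L d D i j) / real d | i j. i < M \<and> j < M \<and> i \<noteq> j})"

text \<open>Sub-coherence nu (convention: 0 if d = 1).\<close>
definition sub_coherence :: "nat \<Rightarrow> nat \<Rightarrow> nat \<Rightarrow> (nat \<Rightarrow> nat \<Rightarrow> complex) \<Rightarrow> real" where
  "sub_coherence L M d D =
     Max (insert 0 {cmod (\<Sum>r<L. cnj (D r (l * d + a)) * D r (l * d + b)) | l a b.
                      l < M \<and> a < d \<and> b < d \<and> a \<noteq> b})"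

definition rho :: "nat \<Rightarrow> nat \<Rightarrow> (nat \<Rightarrow> nat \<Rightarrow> complex) \<Rightarrow> (nat \<Rightarrow> complex) \<Rightarrow> nat \<Rightarrow> real" where
  "rho L d D y i = vnorm d (\<lambda>a. \<Sum>r<L. cnj (D r (i * d + a)) * y r)"

definition supported_on :: "nat \<Rightarrow> nat \<Rightarrow> nat set \<Rightarrow> (nat \<Rightarrow> complex) \<Rightarrow> bool" where
  "supported_on M d I v \<longleftrightarrow> (\<forall>c < M * d. c div d \<notin> I \<longrightarrow> v c = 0)"

definition full_rank_k :: "nat \<Rightarrow> nat \<Rightarrow> nat \<Rightarrow> nat \<Rightarrow> (nat \<Rightarrow> nat \<Rightarrow> complex) \<Rightarrow> bool" where
  "full_rank_k L M d k D \<longleftrightarrow>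
     (\<forall>I. I \<subseteq> {..<M} \<and> card I \<le> k \<longrightarrow>
        (\<forall>v. supported_on M d I v \<and> (\<forall>r<L. matvec L (M * d) D v r = 0)
              \<longrightarrow> (\<forall>c < M * d. v c = 0)))"

definition bth_selection :: "nat \<Rightarrow> nat \<Rightarrow> nat \<Rightarrow> nat \<Rightarrow> (nat \<Rightarrow> nat \<Rightarrow> complex) \<Rightarrow> (nat \<Rightarrow> complex) \<Rightarrow> nat set \<Rightarrow> bool" where
  "bth_selection L M d k D y Sh \<longleftrightarrow>
     Sh \<subseteq> {..<M} \<and> card Sh = k \<and>
     (\<forall>i\<in>Sh. \<forall>j\<in>{..<M} - Sh. rho L d D y j \<le> rho L d D y i)"

text \<open>BTH estimate: zero outside the blocks of Sh, and least squares on the blocks of Sh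
  (for D_Sh of full column rank this is exactly D_Sh^dagger y on Sh).\<close>
definition bth_estimate :: "nat \<Rightarrow> nat \<Rightarrow> nat \<Rightarrow> (nat \<Rightarrow> nat \<Rightarrow> complex) \<Rightarrow> (nat \<Rightarrow> complex) \<Rightarrow> nat set \<Rightarrow> (nat \<Rightarrow> complex) \<Rightarrow> bool" where
  "bth_estimate L M d D y Sh xh \<longleftrightarrow>
     supported_on M d Sh xh \<and>
     (\<forall>z. supported_on M d Sh z \<longrightarrow>
        vnorm L (\<lambda>r. y r - matvec L (M * d) D xh r) \<le> vnorm L (\<lambda>r. y r - matvec L (M * d) D z r))"

end

theory Submission
  imports Defs "HOL-Analysis.L2_Norm"
begin

definition ip :: "nat \<Rightarrow> (nat \<Rightarrow> complex) \<Rightarrow> (nat \<Rightarrow> complex) \<Rightarrow> complex" where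
  "ip n u v = (\<Sum>a<n. cnj (u a) * v a)"

definition Dblk :: "nat \<Rightarrow> nat \<Rightarrow> (nat \<Rightarrow> nat \<Rightarrow> complex) \<Rightarrow> nat \<Rightarrow> (nat \<Rightarrow> complex) \<Rightarrow> (nat \<Rightarrow> complex)" where
  "Dblk L d D i u = (\<lambda>r. \<Sum>a<d. D r (i * d + a) * u a)"

lemma vnorm_L2: "vnorm n u = L2_set (\<lambda>a. cmod (u a)) {..<n}"
  by (simp add: vnorm_def L2_set_def)

lemma vnorm_nonneg: "0 \<le> vnorm n u" by (simp add: vnorm_def sum_nonneg)

lemma vnorm_sq: "(vnorm n u)^2 = (\<Sum>a<n. (cmod (u a))^2)"
  by (simp add: vnorm_def sum_nonneg)

lemma Re_cnj_self: "Re (cnj z * z) = (cmod z)^2"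
  by (subst cmod_power2) (simp add: power2_eq_square)

lemma ip_self: "Re (ip n u u) = (vnorm n u)^2"
  unfolding vnorm_sq ip_def by (simp only: Re_sum Re_cnj_self)

lemma ip_CS: "cmod (ip n u v) \<le> vnorm n u * vnorm n v"
proof -
  have "cmod (ip n u v) \<le> (\<Sum>a<n. cmod (u a) * cmod (v a))"
    unfolding ip_def by (rule order_trans[OF norm_sum]) (simp add: norm_mult)
  also have "\<dots> \<le> vnorm n u * vnorm n v"
    unfolding vnorm_L2 using L2_set_mult_ineq[of "\<lambda>a. cmod (u a)" "\<lambda>a. cmod (v a)" "{..<n}"] by simp
  finally show ?thesis .
qed

lemma sum_sq_card:
  fixes t :: "'a \<Rightarrow> real"
  shows "(\<Sum>a\<in>A. t a)^2 \<le> real (card A) * (\<Sum>a\<in>A. (t a)^2)"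
proof (cases "finite A")
  case True
  have "\<bar>\<Sum>a\<in>A. t a\<bar> \<le> (\<Sum>a\<in>A. \<bar>t a\<bar> * \<bar>1\<bar>)" by (simp add: sum_abs)
  also have "\<dots> \<le> L2_set t A * L2_set (\<lambda>_. 1::real) A" by (rule L2_set_mult_ineq)
  finally have h: "\<bar>\<Sum>a\<in>A. t a\<bar> \<le> L2_set t A * L2_set (\<lambda>_. 1::real) A" .
  have "(\<Sum>a\<in>A. t a)^2 = \<bar>\<Sum>a\<in>A. t a\<bar>^2" by simp
  also have "\<dots> \<le> (L2_set t A * L2_set (\<lambda>_. 1::real) A)^2"
    by (rule power_mono[OF h]) simp
  also have "\<dots> = (\<Sum>a\<in>A. (t a)^2) * real (card A)"
    by (simp add: power_mult_distrib L2_set_def sum_nonneg)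
  finally show ?thesis by (simp add: mult.commute)
qed simp

lemma offdiag_bound:
  fixes t :: "'a \<Rightarrow> real"
  assumes "finite A" "\<And>a. a \<in> A \<Longrightarrow> 0 \<le> t a"
  shows "(\<Sum>a\<in>A. \<Sum>b\<in>A - {a}. t a * t b) \<le> (real (card A) - 1) * (\<Sum>a\<in>A. (t a)^2)"
proof -
  have "(\<Sum>a\<in>A. \<Sum>b\<in>A - {a}. t a * t b) = (\<Sum>a\<in>A. \<Sum>b\<in>A. t a * t b) - (\<Sum>a\<in>A. (t a)^2)"
  proof -
    have "\<And>a. a \<in> A \<Longrightarrow> (\<Sum>b\<in>A. t a * t b) = t a * t a + (\<Sum>b\<in>A - {a}. t a * t b)"
      using assms(1) by (simp add: sum.remove)
    then have "(\<Sum>a\<in>A. \<Sum>b\<in>A. t a * t b) = (\<Sum>a\<in>A. t a * t a + (\<Sum>b\<in>A - {a}. t a * t b))"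
      by (rule sum.cong[OF refl])
    then show ?thesis by (simp add: sum.distrib power2_eq_square)
  qed
  also have "(\<Sum>a\<in>A. \<Sum>b\<in>A. t a * t b) = (\<Sum>a\<in>A. t a)^2"
    by (simp add: power2_eq_square sum_product)
  finally show ?thesis using sum_sq_card[of t A] by (simp add: algebra_simps)
qed

lemma ip_add_right: "ip n u (\<lambda>r. f r + g r) = ip n u f + ip n u g"
  by (simp add: ip_def distrib_left sum.distrib)

lemma ip_diff_right: "ip n u (\<lambda>r. f r - g r) = ip n u f - ip n u g"
  by (simp add: ip_def right_diff_distrib sum_subtractf)

lemma ip_sum_right: "ip n u (\<lambda>r. \<Sum>l\<in>T. F l r) = (\<Sum>l\<in>T. ip n u (F l))"
  by (simp add: ip_def sum_distrib_left sum.swap[of _ T])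

lemma ip_sum_left: "ip n (\<lambda>r. \<Sum>l\<in>T. F l r) v = (\<Sum>l\<in>T. ip n (F l) v)"
  by (simp add: ip_def sum_distrib_right sum.swap[of _ T] cnj_sum)

lemma ip_scale_left: "ip n (\<lambda>a. c * u a) v = cnj c * ip n u v"
  by (simp add: ip_def sum_distrib_left mult.assoc)

lemma ip_scale_right: "ip n u (\<lambda>a. c * v a) = c * ip n u v"
  by (simp add: ip_def sum_distrib_left mult.left_commute)

lemma ip_Dblk:
  "ip L (Dblk L d D i u) (Dblk L d D l v) = ip d u (matvec d d (blockgram L d D i l) v)"
proof -
  define g where "g = (\<lambda>r a b. cnj (u a) * (cnj (D r (i * d + a)) * D r (l * d + b) * v b))"
  have "ip L (Dblk L d D i u) (Dblk L d D l v) = (\<Sum>r<L. \<Sum>b<d. \<Sum>a<d. g r a b)"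
    unfolding ip_def Dblk_def g_def
    by (simp add: cnj_sum sum_product mult.commute mult.left_commute)
  also have "\<dots> = (\<Sum>b<d. \<Sum>r<L. \<Sum>a<d. g r a b)" by (rule sum.swap)
  also have "\<dots> = (\<Sum>b<d. \<Sum>a<d. \<Sum>r<L. g r a b)" by (rule sum.cong[OF refl], rule sum.swap)
  also have "\<dots> = (\<Sum>a<d. \<Sum>b<d. \<Sum>r<L. g r a b)" by (rule sum.swap)
  also have "\<dots> = ip d u (matvec d d (blockgram L d D i l) v)"
    unfolding ip_def matvec_def blockgram_def g_def
    by (simp add: sum_distrib_left sum_distrib_right)
  finally show ?thesis .
qed

lemma ip_DH:
  "ip d u (\<lambda>a. \<Sum>r<L. cnj (D r (i * d + a)) * y r) = ip L (Dblk L d D i u) y"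
  unfolding ip_def Dblk_def
  by (simp add: cnj_sum sum_distrib_left sum_distrib_right sum.swap[of _ "{..<L}"] mult.commute mult.left_commute)

lemma sum_blocks: "(\<Sum>c<(M::nat)*d. f c) = (\<Sum>l<M. \<Sum>a<d. f (l*d+a))"
proof (induction M)
  case 0
  then show ?case by simp
next
  case (Suc M)
  have "(\<Sum>c<Suc M*d. f c) = (\<Sum>c<M*d. f c) + (\<Sum>c\<in>{M*d..<M*d+d}. f c)"
    by (simp add: lessThan_atLeast0 sum.atLeastLessThan_concat add.commute)
  also have "(\<Sum>c\<in>{M*d..<M*d+d}. f c) = (\<Sum>a<d. f (M*d+a))"
    using sum.shift_bounds_nat_ivl[of f 0 "M*d" d] by (simp add: lessThan_atLeast0 add.commute)
  finally show ?case using Suc by simp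
qed

lemma blk_idx: "l < M \<Longrightarrow> a < d \<Longrightarrow> l * d + a < M * (d::nat)"
proof -
  assume "l < M" "a < d"
  then have "l * d + a < Suc l * d" by simp
  also have "\<dots> \<le> M * d" using \<open>l < M\<close> by (intro mult_le_mono1) simp
  finally show ?thesis .
qed

lemma supp_zero:
  assumes "supported_on M d T v" "l < M" "l \<notin> T" "a < d"
  shows "v (l * d + a) = 0"
proof -
  have "(l * d + a) div d = l" using assms(4) by simp
  then show ?thesis using assms blk_idx[of l M a d] unfolding supported_on_def by auto
qed

lemma matvec_blocks:
  assumes "supported_on M d T v" "T \<subseteq> {..<M}"
  shows "matvec L (M * d) D v r = (\<Sum>l\<in>T. Dblk L d D l (blk d v l) r)"
proof -
  have "matvec L (M * d) D v r = (\<Sum>l<M. Dblk L d D l (blk d v l) r)"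
    unfolding matvec_def Dblk_def blk_def by (rule sum_blocks)
  also have "\<dots> = (\<Sum>l\<in>T. Dblk L d D l (blk d v l) r)"
    using assms(2) by (intro sum.mono_neutral_right)
      (auto simp: Dblk_def blk_def supp_zero[OF assms(1)])
  finally show ?thesis .
qed

lemma vnorm_blocks:
  assumes "supported_on M d T v" "T \<subseteq> {..<M}"
  shows "(vnorm (M * d) v)^2 = (\<Sum>l\<in>T. (blocknorm d v l)^2)"
proof -
  have "(vnorm (M * d) v)^2 = (\<Sum>l<M. (blocknorm d v l)^2)"
    unfolding vnorm_sq blocknorm_def blk_def by (rule sum_blocks)
  also have "\<dots> = (\<Sum>l\<in>T. (blocknorm d v l)^2)"
    using assms(2) by (intro sum.mono_neutral_right)
      (auto simp: blocknorm_def vnorm_sq blk_def supp_zero[OF assms(1)])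
  finally show ?thesis .
qed

lemma vnorm_scale: "vnorm n (\<lambda>a. c * u a) = cmod c * vnorm n u"
proof -
  have "(\<Sum>a<n. (cmod (c * u a))^2) = (cmod c)^2 * (\<Sum>a<n. (cmod (u a))^2)"
    by (simp add: norm_mult power_mult_distrib sum_distrib_left)
  then show ?thesis unfolding vnorm_def by (simp add: real_sqrt_mult)
qed

lemma vnorm_zero: "vnorm n u = 0 \<Longrightarrow> a < n \<Longrightarrow> u a = 0"
  unfolding vnorm_def by (simp add: sum_nonneg_eq_0_iff)

lemma entry_le_vnorm: "a < n \<Longrightarrow> cmod (u a) \<le> vnorm n u"
proof -
  assume "a < n"
  have "(cmod (u a))^2 \<le> (\<Sum>b<n. (cmod (u b))^2)"
    using \<open>a < n\<close> by (intro member_le_sum) auto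
  then show ?thesis unfolding vnorm_def by (simp add: real_le_rsqrt)
qed

lemma specnorm_bound: "vnorm n (matvec n n A u) \<le> specnorm n n A * vnorm n u"
proof (cases "vnorm n u = 0")
  case True
  then have "matvec n n A u r = 0" for r unfolding matvec_def by (simp add: vnorm_zero)
  then show ?thesis using True by (simp add: vnorm_def)
next
  case False
  define t where "t = vnorm n u"
  have tpos: "t > 0" using False vnorm_nonneg[of n u] unfolding t_def by linarith
  define u' where "u' = (\<lambda>a. complex_of_real (1 / t) * u a)"
  have nu': "vnorm n u' = 1" unfolding u'_def vnorm_scale using tpos by (simp add: t_def norm_divide)
  have mv: "matvec n n A u' = (\<lambda>r. complex_of_real (1/t) * matvec n n A u r)"
    unfolding u'_def matvec_def by (simp add: sum_distrib_left mult.left_commute)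
  define B where "B = (\<Sum>r<n. \<Sum>c<n. cmod (A r c))"
  have bd: "vnorm n (matvec n n A v) \<le> B" if "vnorm n v = 1" for v
  proof -
    have "vnorm n (matvec n n A v) \<le> (\<Sum>r<n. cmod (matvec n n A v r))"
      unfolding vnorm_L2 by (rule L2_set_le_sum) simp
    also have "\<dots> \<le> B" unfolding B_def
    proof (rule sum_mono)
      fix r
      have "cmod (matvec n n A v r) \<le> (\<Sum>c<n. cmod (A r c) * cmod (v c))"
        unfolding matvec_def by (rule order_trans[OF norm_sum]) (simp add: norm_mult)
      also have "\<dots> \<le> (\<Sum>c<n. cmod (A r c))"
        using entry_le_vnorm[of _ n v] that by (intro sum_mono) (simp add: mult_left_le)
      finally show "cmod (matvec n n A v r) \<le> (\<Sum>c<n. cmod (A r c))" .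
    qed
    finally show ?thesis .
  qed
  have "vnorm n (matvec n n A u') \<le> specnorm n n A"
    unfolding specnorm_def
    by (rule cSup_upper) (use nu' bd in \<open>auto intro!: bdd_aboveI[where M=B]\<close>)
  then have "vnorm n (matvec n n A u) / t \<le> specnorm n n A"
    using tpos unfolding mv vnorm_scale by (simp add: norm_divide)
  then show ?thesis using tpos by (simp add: t_def pos_divide_le_eq)
qed

lemma nu_bound:
  assumes "i < M" "a < d" "b < d" "a \<noteq> b"
  shows "cmod (blockgram L d D i i a b) \<le> sub_coherence L M d D"
proof -
  let ?f = "\<lambda>(l, a, b). cmod (\<Sum>r<L. cnj (D r (l * d + a)) * D r (l * d + b))"
  have sub: "{cmod (\<Sum>r<L. cnj (D r (l * d + a)) * D r (l * d + b)) | l a b.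
                      l < M \<and> a < d \<and> b < d \<and> a \<noteq> b} \<subseteq> ?f ` ({..<M} \<times> {..<d} \<times> {..<d})"
    by (auto simp: image_iff; blast)
  have fin: "finite {cmod (\<Sum>r<L. cnj (D r (l * d + a)) * D r (l * d + b)) | l a b.
                      l < M \<and> a < d \<and> b < d \<and> a \<noteq> b}"
    by (rule finite_subset[OF sub]) simp
  show ?thesis unfolding sub_coherence_def blockgram_def
    by (rule Max_ge) (use fin assms in auto)
qed

lemma nu_nonneg: "0 \<le> sub_coherence L M d D"
proof -
  let ?f = "\<lambda>(l, a, b). cmod (\<Sum>r<L. cnj (D r (l * d + a)) * D r (l * d + b))"
  have sub: "{cmod (\<Sum>r<L. cnj (D r (l * d + a)) * D r (l * d + b)) | l a b.
                      l < M \<and> a < d \<and> b < d \<and> a \<noteq> b} \<subseteq> ?f ` ({..<M} \<times> {..<d} \<times> {..<d})"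
    by (auto simp: image_iff; blast)
  have fin: "finite {cmod (\<Sum>r<L. cnj (D r (l * d + a)) * D r (l * d + b)) | l a b.
                      l < M \<and> a < d \<and> b < d \<and> a \<noteq> b}"
    by (rule finite_subset[OF sub]) simp
  show ?thesis unfolding sub_coherence_def
    by (rule Max_ge) (use fin in auto)
qed

lemma mu_bound:
  assumes "i < M" "j < M" "i \<noteq> j" "0 < d"
  shows "specnorm d d (blockgram L d D i j) \<le> real d * block_coherence L M d D"
proof -
  let ?f = "\<lambda>(i, j). specnorm d d (blockgram L d D i j) / real d"
  have sub: "{specnorm d d (blockgram L d D i j) / real d | i j. i < M \<and> j < M \<and> i \<noteq> j}
      \<subseteq> ?f ` ({..<M} \<times> {..<M})"
    by (auto simp: image_iff; blast)
  have fin: "finite {specnorm d d (blockgram L d D i j) / real d | i j. i < M \<and> j < M \<and> i \<noteq> j}"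
    by (rule finite_subset[OF sub]) simp
  have "specnorm d d (blockgram L d D i j) / real d \<le> block_coherence L M d D"
    unfolding block_coherence_def by (rule Max_ge) (use fin assms in auto)
  then show ?thesis using assms(4) by (simp add: divide_le_eq mult.commute)
qed

lemma mu_nonneg: "0 \<le> block_coherence L M d D"
proof -
  let ?f = "\<lambda>(i, j). specnorm d d (blockgram L d D i j) / real d"
  have sub: "{specnorm d d (blockgram L d D i j) / real d | i j. i < M \<and> j < M \<and> i \<noteq> j}
      \<subseteq> ?f ` ({..<M} \<times> {..<M})"
    by (auto simp: image_iff; blast)
  have fin: "finite {specnorm d d (blockgram L d D i j) / real d | i j. i < M \<and> j < M \<and> i \<noteq> j}"
    by (rule finite_subset[OF sub]) simp
  show ?thesis unfolding block_coherence_def by (rule Max_ge) (use fin in auto)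
qed

lemma ip_self_complex: "ip n u u = complex_of_real ((vnorm n u)^2)"
  unfolding vnorm_sq ip_def of_real_sum
  by (rule sum.cong[OF refl]) (metis complex_norm_square mult.commute)

lemma quad_bound:
  assumes unit_cols: "\<forall>c < M * d. (\<Sum>r<L. (cmod (D r c))\<^sup>2) = 1" and iM: "i < M"
  shows "cmod (ip d u (matvec d d (blockgram L d D i i) u) - complex_of_real ((vnorm d u)^2))
          \<le> (real d - 1) * sub_coherence L M d D * (vnorm d u)^2"
proof -
  define G where "G = blockgram L d D i i"
  define \<nu> where "\<nu> = sub_coherence L M d D"
  have diag: "G a a = 1" if "a < d" for a
  proof -
    have "G a a = (\<Sum>r<L. complex_of_real ((cmod (D r (i * d + a)))^2))"
      unfolding G_def blockgram_def
      by (rule sum.cong[OF refl]) (metis complex_norm_square mult.commute)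
    also have "\<dots> = complex_of_real (\<Sum>r<L. (cmod (D r (i * d + a)))^2)" by simp
    also have "\<dots> = 1" using unit_cols blk_idx[OF iM that] by simp
    finally show ?thesis .
  qed
  have split: "ip d u (matvec d d G u) = ip d u u +
      (\<Sum>a<d. \<Sum>b\<in>{..<d} - {a}. cnj (u a) * (G a b * u b))"
  proof -
    have "ip d u (matvec d d G u) = (\<Sum>a<d. \<Sum>b<d. cnj (u a) * (G a b * u b))"
      unfolding ip_def matvec_def by (simp add: sum_distrib_left)
    also have "\<dots> = (\<Sum>a<d. cnj (u a) * u a + (\<Sum>b\<in>{..<d} - {a}. cnj (u a) * (G a b * u b)))"
    proof (rule sum.cong[OF refl])
      fix a assume "a \<in> {..<d}"
      then show "(\<Sum>b<d. cnj (u a) * (G a b * u b)) =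
          cnj (u a) * u a + (\<Sum>b\<in>{..<d} - {a}. cnj (u a) * (G a b * u b))"
        by (simp add: sum.remove[of "{..<d}" a] diag)
    qed
    also have "\<dots> = ip d u u + (\<Sum>a<d. \<Sum>b\<in>{..<d} - {a}. cnj (u a) * (G a b * u b))"
      unfolding ip_def by (simp add: sum.distrib)
    finally show ?thesis .
  qed
  have "cmod (\<Sum>a<d. \<Sum>b\<in>{..<d} - {a}. cnj (u a) * (G a b * u b))
        \<le> (\<Sum>a<d. \<Sum>b\<in>{..<d} - {a}. \<nu> * (cmod (u a) * cmod (u b)))"
  proof -
    have "cmod (\<Sum>a<d. \<Sum>b\<in>{..<d} - {a}. cnj (u a) * (G a b * u b))
        \<le> (\<Sum>a<d. cmod (\<Sum>b\<in>{..<d} - {a}. cnj (u a) * (G a b * u b)))" by (rule norm_sum)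
    also have "\<dots> \<le> (\<Sum>a<d. \<Sum>b\<in>{..<d} - {a}. \<nu> * (cmod (u a) * cmod (u b)))"
    proof (rule sum_mono)
      fix a assume a: "a \<in> {..<d}"
      have "cmod (\<Sum>b\<in>{..<d} - {a}. cnj (u a) * (G a b * u b))
          \<le> (\<Sum>b\<in>{..<d} - {a}. cmod (cnj (u a) * (G a b * u b)))" by (rule norm_sum)
      also have "\<dots> \<le> (\<Sum>b\<in>{..<d} - {a}. \<nu> * (cmod (u a) * cmod (u b)))"
      proof (rule sum_mono)
        fix b assume b: "b \<in> {..<d} - {a}"
        have "cmod (G a b) \<le> \<nu>" unfolding G_def \<nu>_def using a b iM by (intro nu_bound) auto
        then have "cmod (G a b) * (cmod (u a) * cmod (u b)) \<le> \<nu> * (cmod (u a) * cmod (u b))"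
          by (intro mult_right_mono) auto
        then show "cmod (cnj (u a) * (G a b * u b)) \<le> \<nu> * (cmod (u a) * cmod (u b))"
          by (simp add: norm_mult mult.commute mult.left_commute)
      qed
      finally show "cmod (\<Sum>b\<in>{..<d} - {a}. cnj (u a) * (G a b * u b))
          \<le> (\<Sum>b\<in>{..<d} - {a}. \<nu> * (cmod (u a) * cmod (u b)))" .
    qed
    finally show ?thesis .
  qed
  also have "\<dots> = \<nu> * (\<Sum>a<d. \<Sum>b\<in>{..<d} - {a}. cmod (u a) * cmod (u b))"
    by (simp add: sum_distrib_left)
  also have "\<dots> \<le> \<nu> * ((real d - 1) * (vnorm d u)^2)"
    using offdiag_bound[of "{..<d}" "\<lambda>a. cmod (u a)"] nu_nonneg[of L M d D]
    unfolding \<nu>_def vnorm_sq by (intro mult_left_mono) auto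
  finally have fin: "cmod (\<Sum>a<d. \<Sum>b\<in>{..<d} - {a}. cnj (u a) * (G a b * u b)) \<le> \<nu> * ((real d - 1) * (vnorm d u)^2)" .
  have eq: "ip d u (matvec d d G u) - complex_of_real ((vnorm d u)^2) = (\<Sum>a<d. \<Sum>b\<in>{..<d} - {a}. cnj (u a) * (G a b * u b))"
    using split ip_self_complex[of d u] by simp
  show ?thesis using fin unfolding eq[unfolded G_def] G_def \<nu>_def by (simp add: mult_ac)
qed

lemma quad_lower:
  assumes "\<forall>c < M * d. (\<Sum>r<L. (cmod (D r c))\<^sup>2) = 1" "i < M"
  shows "(1 - (real d - 1) * sub_coherence L M d D) * (vnorm d u)^2
          \<le> Re (ip L (Dblk L d D i u) (Dblk L d D i u))"
proof -
  have "\<bar>Re (ip d u (matvec d d (blockgram L d D i i) u) - complex_of_real ((vnorm d u)^2))\<bar>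
     \<le> (real d - 1) * sub_coherence L M d D * (vnorm d u)^2"
    using abs_Re_le_cmod quad_bound[OF assms, of u] order_trans by blast
  then show ?thesis unfolding ip_Dblk by (simp add: algebra_simps abs_le_iff)
qed

lemma quad_upper:
  assumes "\<forall>c < M * d. (\<Sum>r<L. (cmod (D r c))\<^sup>2) = 1" "i < M"
  shows "Re (ip L (Dblk L d D i u) (Dblk L d D i u))
          \<le> (1 + (real d - 1) * sub_coherence L M d D) * (vnorm d u)^2"
proof -
  have "\<bar>Re (ip d u (matvec d d (blockgram L d D i i) u) - complex_of_real ((vnorm d u)^2))\<bar>
     \<le> (real d - 1) * sub_coherence L M d D * (vnorm d u)^2"
    using abs_Re_le_cmod quad_bound[OF assms, of u] order_trans by blast
  then show ?thesis unfolding ip_Dblk by (simp add: algebra_simps abs_le_iff)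
qed

lemma Dblk_norm:
  assumes "\<forall>c < M * d. (\<Sum>r<L. (cmod (D r c))\<^sup>2) = 1" "i < M"
  shows "vnorm L (Dblk L d D i u) \<le> sqrt (1 + (real d - 1) * sub_coherence L M d D) * vnorm d u"
proof -
  have "(vnorm L (Dblk L d D i u))^2 \<le> (1 + (real d - 1) * sub_coherence L M d D) * (vnorm d u)^2"
    using quad_upper[OF assms, of u] ip_self[of L "Dblk L d D i u"] by simp
  then have "sqrt ((vnorm L (Dblk L d D i u))^2) \<le> sqrt ((1 + (real d - 1) * sub_coherence L M d D) * (vnorm d u)^2)"
    by (rule real_sqrt_le_mono)
  then show ?thesis by (simp add: real_sqrt_mult vnorm_nonneg)
qed

lemma cross_bound:
  assumes "i < M" "l < M" "i \<noteq> l" "0 < d"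
  shows "cmod (ip L (Dblk L d D i u) (Dblk L d D l v))
          \<le> real d * block_coherence L M d D * (vnorm d u * vnorm d v)"
proof -
  have "cmod (ip L (Dblk L d D i u) (Dblk L d D l v)) \<le> vnorm d u * vnorm d (matvec d d (blockgram L d D i l) v)"
    unfolding ip_Dblk by (rule ip_CS)
  also have "\<dots> \<le> vnorm d u * (specnorm d d (blockgram L d D i l) * vnorm d v)"
    by (intro mult_left_mono specnorm_bound vnorm_nonneg)
  also have "\<dots> \<le> vnorm d u * (real d * block_coherence L M d D * vnorm d v)"
    by (intro mult_left_mono mult_right_mono mu_bound assms vnorm_nonneg)
  finally show ?thesis by (simp add: mult_ac)
qed

lemma norm_expand:
  "(vnorm n (\<lambda>r. p r - complex_of_real t * q r))^2
     = (vnorm n p)^2 - 2 * t * Re (ip n p q) + t^2 * (vnorm n q)^2"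
proof -
  have pt: "(cmod (a - complex_of_real t * b))^2 = (cmod a)^2 - 2 * t * Re (cnj a * b) + t^2 * (cmod b)^2" for a b
    by (simp only: cmod_power2) (simp add: power2_eq_square algebra_simps)
  show ?thesis unfolding vnorm_sq ip_def pt
    by (simp add: sum.distrib sum_subtractf sum_distrib_left Re_sum distrib_left)
qed

theorem theorem1:
  fixes L M d k :: nat
    and D :: "nat \<Rightarrow> nat \<Rightarrow> complex"
    and x w y xh :: "nat \<Rightarrow> complex"
    and Sh :: "nat set"
    and \<epsilon> :: real
  assumes unit_cols: "\<forall>c < M * d. (\<Sum>r<L. (cmod (D r c))\<^sup>2) = 1"
    and LN: "L < M * d"
    and rank: "full_rank_k L M d k D"
    and sparse: "card (bsupp M d x) \<le> k"
    and x_nz: "\<exists>c < M * d. x c \<noteq> 0"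
    and eps_pos: "\<epsilon> > 0"
    and noise: "vnorm L w \<le> \<epsilon>"
    and obs: "y = (\<lambda>r. matvec L (M * d) D x r + w r)"
    and cond: "(1 - (real d - 1) * sub_coherence L M d D) * Min (blocknorm d x ` bsupp M d x)
               > 2 * \<epsilon> * sqrt (1 + (real d - 1) * sub_coherence L M d D)
                 + (2 * real k - 1) * real d * block_coherence L M d D
                   * Max (blocknorm d x ` bsupp M d x)"
    and sel: "bth_selection L M d k D y Sh"
    and est: "bth_estimate L M d D y Sh xh"
  shows "bsupp M d x \<subseteq> Sh \<and>
         (vnorm (M * d) (\<lambda>c. xh c - x c))\<^sup>2
           \<le> \<epsilon>\<^sup>2 / (1 - (real d - 1) * sub_coherence L M d D
                     - (real k - 1) * real d * block_coherence L M d D)"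
proof -
  define \<nu> where "\<nu> = sub_coherence L M d D"
  define \<mu> where "\<mu> = block_coherence L M d D"
  define S where "S = bsupp M d x"
  define a0 where "a0 = 1 - (real d - 1) * \<nu>"
  define sq where "sq = sqrt (1 + (real d - 1) * \<nu>)"
  define xmin where "xmin = Min (blocknorm d x ` S)"
  define xmax where "xmax = Max (blocknorm d x ` S)"
  define xl where "xl = (\<lambda>l. blk d x l)"
  define DH where "DH = (\<lambda>i a. \<Sum>r<L. cnj (D r (i * d + a)) * y r)"
  define P where "P = real d * \<mu> * xmax"
  have nu0: "0 \<le> \<nu>" unfolding \<nu>_def by (rule nu_nonneg)
  have mu0: "0 \<le> \<mu>" unfolding \<mu>_def by (rule mu_nonneg)
  obtain c0 where c0: "c0 < M * d" "x c0 \<noteq> 0" using x_nz by blast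
  have dpos: "0 < d" using c0(1) by (cases d) auto
  have SM: "S \<subseteq> {..<M}" unfolding S_def bsupp_def by auto
  have finS: "finite S" using SM finite_subset by blast
  have inS: "c div d \<in> S" if "c < M * d" "x c \<noteq> 0" for c
  proof -
    have "c div d < M" using that(1) by (simp add: less_mult_imp_div_less)
    moreover have "c mod d < d" using dpos by simp
    moreover have "x ((c div d) * d + c mod d) \<noteq> 0" using that(2) by simp
    ultimately show ?thesis unfolding S_def bsupp_def by blast
  qed
  have Sne: "S \<noteq> {}" using inS c0 by blast
  have xsupp: "supported_on M d S x" unfolding supported_on_def using inS by blast
  have bn_pos: "0 < blocknorm d x l" if lS: "l \<in> S" for l
  proof -
    obtain j where j: "j < d" "x (l*d+j) \<noteq> 0" using lS unfolding S_def bsupp_def by blast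
    then have "blocknorm d x l \<noteq> 0" unfolding blocknorm_def blk_def
      using vnorm_zero[of d "\<lambda>j. x (l*d+j)" j] by auto
    then show ?thesis using vnorm_nonneg[of d "blk d x l"] unfolding blocknorm_def by linarith
  qed
  have xmin_le: "xmin \<le> blocknorm d x l" if "l \<in> S" for l
    unfolding xmin_def using finS that by (intro Min_le) auto
  have xmax_ge: "blocknorm d x l \<le> xmax" if "l \<in> S" for l
    unfolding xmax_def using finS that by (intro Max_ge) auto
  have xmin_pos: "0 < xmin" unfolding xmin_def using finS Sne bn_pos by (subst Min_gr_iff) auto
  obtain l0 where l0: "l0 \<in> S" using Sne by blast
  have xmm: "xmin \<le> xmax" using xmin_le[OF l0] xmax_ge[OF l0] by linarith
  have sk: "card S \<le> k" using sparse S_def by simp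
  have k1: "1 \<le> k" using sk Sne finS card_gt_0_iff[of S] by linarith
  have sq0: "0 \<le> sq" unfolding sq_def using nu0 dpos by simp
  have cond': "a0 * xmin > 2 * \<epsilon> * sq + (2 * real k - 1) * real d * \<mu> * xmax"
    using cond unfolding a0_def sq_def \<nu>_def \<mu>_def xmin_def xmax_def S_def .
  have P0: "0 \<le> P" unfolding P_def using mu0 xmm xmin_pos by (intro mult_nonneg_nonneg) auto
  define Kc where "Kc = (2 * real k - 1) * real d * \<mu>"
  have Kc0: "0 \<le> Kc" unfolding Kc_def using k1 mu0 by (intro mult_nonneg_nonneg) auto
  have "Kc * xmin \<le> Kc * xmax" using xmm Kc0 by (rule mult_left_mono)
  moreover have "0 \<le> 2 * \<epsilon> * sq" using eps_pos sq0 by simp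
  ultimately have "Kc * xmin < a0 * xmin" using cond' unfolding Kc_def by linarith
  then have a0Kc: "Kc < a0" using xmin_pos by (rule mult_right_less_imp_less[OF _ less_imp_le])
  have a0pos: "0 < a0" using a0Kc Kc0 by linarith
  have den_pos: "0 < a0 - (real k - 1) * real d * \<mu>"
  proof -
    have "(real k - 1) * real d \<le> (2 * real k - 1) * real d" using k1 by (intro mult_right_mono) auto
    then have "(real k - 1) * real d * \<mu> \<le> Kc" unfolding Kc_def using mu0
      by (rule mult_right_mono)
    then show ?thesis using a0Kc by linarith
  qed
  have yeq: "y = (\<lambda>r. (\<Sum>l\<in>S. Dblk L d D l (xl l) r) + w r)"
    using obs matvec_blocks[OF xsupp SM] unfolding xl_def by auto
  have key: "ip L (Dblk L d D i u) y = (\<Sum>l\<in>S. ip L (Dblk L d D i u) (Dblk L d D l (xl l)))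
              + ip L (Dblk L d D i u) w" for i u
    unfolding yeq ip_add_right ip_sum_right by simp
  have rhoDH: "rho L d D y i = vnorm d (DH i)" for i unfolding rho_def DH_def by simp
  have ipDH: "ip d u (DH i) = ip L (Dblk L d D i u) y" for i u unfolding DH_def by (rule ip_DH)
  have low: "a0 * xmin - (real k - 1) * P - sq * \<epsilon> \<le> rho L d D y i" if iS: "i \<in> S" for i
  proof -
    have iM: "i < M" using iS SM by auto
    define t where "t = vnorm d (xl i)"
    have tpos: "0 < t" using bn_pos[OF iS] unfolding t_def xl_def blocknorm_def .
    have tmin: "xmin \<le> t" using xmin_le[OF iS] unfolding t_def xl_def blocknorm_def .
    define E where "E = ip L (Dblk L d D i (xl i)) y"
    have E1: "cmod E \<le> t * rho L d D y i"
      unfolding E_def ipDH[symmetric] rhoDH t_def by (rule ip_CS)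
    define Q where "Q = ip L (Dblk L d D i (xl i)) (Dblk L d D i (xl i))"
    define C where "C = (\<Sum>l\<in>S-{i}. ip L (Dblk L d D i (xl i)) (Dblk L d D l (xl l)))"
    define W where "W = ip L (Dblk L d D i (xl i)) w"
    have Esplit: "E = Q + C + W"
      unfolding E_def key Q_def C_def W_def using sum.remove[OF finS iS] by simp
    have Qb: "a0 * t^2 \<le> Re Q"
      unfolding Q_def a0_def t_def \<nu>_def by (rule quad_lower[OF unit_cols iM])
    have Cb: "cmod C \<le> (real k - 1) * P * t"
    proof -
      have "cmod C \<le> (\<Sum>l\<in>S-{i}. cmod (ip L (Dblk L d D i (xl i)) (Dblk L d D l (xl l))))"
        unfolding C_def by (rule norm_sum)
      also have "\<dots> \<le> (\<Sum>l\<in>S-{i}. P * t)"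
      proof (rule sum_mono)
        fix l assume l: "l \<in> S - {i}"
        have "cmod (ip L (Dblk L d D i (xl i)) (Dblk L d D l (xl l)))
              \<le> real d * \<mu> * (t * vnorm d (xl l))"
          unfolding \<mu>_def t_def using l SM iM dpos by (intro cross_bound) auto
        also have "\<dots> \<le> real d * \<mu> * (t * xmax)"
          using xmax_ge[of l] l tpos mu0 unfolding xl_def blocknorm_def
          by (intro mult_left_mono) auto
        finally show "cmod (ip L (Dblk L d D i (xl i)) (Dblk L d D l (xl l))) \<le> P * t"
          unfolding P_def by (simp add: mult_ac)
      qed
      also have "\<dots> = real (card S - 1) * (P * t)" using finS iS by simp
      also have "\<dots> \<le> (real k - 1) * (P * t)"
        using sk k1 P0 tpos iS finS card_gt_0_iff[of S]
        by (intro mult_right_mono) (auto simp: of_nat_diff)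
      finally show ?thesis by (simp add: mult_ac)
    qed
    have Wb: "cmod W \<le> sq * t * \<epsilon>"
    proof -
      have "cmod W \<le> vnorm L (Dblk L d D i (xl i)) * vnorm L w" unfolding W_def by (rule ip_CS)
      also have "\<dots> \<le> (sq * t) * \<epsilon>"
        using Dblk_norm[OF unit_cols iM, of "xl i"] noise vnorm_nonneg[of L w] sq0 tpos
        unfolding sq_def t_def \<nu>_def by (intro mult_mono) auto
      finally show ?thesis .
    qed
    have "Re E = Re Q + Re C + Re W" unfolding Esplit by simp
    moreover have "- cmod C \<le> Re C" "- cmod W \<le> Re W"
      using abs_Re_le_cmod[of C] abs_Re_le_cmod[of W] by linarith+
    moreover have "Re E \<le> cmod E" using abs_Re_le_cmod[of E] by linarith
    ultimately have "a0 * t^2 - (real k - 1) * P * t - sq * t * \<epsilon> \<le> t * rho L d D y i"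
      using Qb Cb Wb E1 by linarith
    then have "t * (a0 * t - (real k - 1) * P - sq * \<epsilon>) \<le> t * rho L d D y i"
      by (simp add: algebra_simps power2_eq_square)
    then have "a0 * t - (real k - 1) * P - sq * \<epsilon> \<le> rho L d D y i"
      using tpos by (simp add: mult_le_cancel_left_pos)
    moreover have "a0 * xmin \<le> a0 * t" using a0pos tmin by simp
    ultimately show ?thesis by linarith
  qed
  have upp: "rho L d D y j \<le> real k * P + sq * \<epsilon>" if jM: "j < M" and jS: "j \<notin> S" for j
  proof -
    define \<rho> where "\<rho> = rho L d D y j"
    have \<rho>0: "0 \<le> \<rho>" unfolding \<rho>_def rho_def by (rule vnorm_nonneg)
    show ?thesis
    proof (cases "\<rho> = 0")
      case True
      then show ?thesis using P0 sq0 eps_pos unfolding \<rho>_def by simp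
    next
      case False
      then have \<rho>pos: "0 < \<rho>" using \<rho>0 by linarith
      define u where "u = (\<lambda>a. complex_of_real (1/\<rho>) * DH j a)"
      have un: "vnorm d u = 1" unfolding u_def vnorm_scale using \<rho>pos
        by (simp add: \<rho>_def rhoDH norm_divide)
      have "ip d u (DH j) = cnj (complex_of_real (1/\<rho>)) * complex_of_real (\<rho>^2)"
        unfolding u_def ip_scale_left ip_self_complex \<rho>_def rhoDH by simp
      also have "\<dots> = complex_of_real \<rho>" using \<rho>pos by (simp add: power2_eq_square)
      finally have ipu: "ip d u (DH j) = complex_of_real \<rho>" .
      have "\<rho> = Re (ip L (Dblk L d D j u) y)" using ipu ipDH by simp
      also have "\<dots> \<le> cmod (ip L (Dblk L d D j u) y)" using abs_Re_le_cmod by (rule order_trans[OF abs_ge_self])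
      also have "\<dots> \<le> cmod (\<Sum>l\<in>S. ip L (Dblk L d D j u) (Dblk L d D l (xl l))) + cmod (ip L (Dblk L d D j u) w)"
        unfolding key by (rule norm_triangle_ineq)
      also have "\<dots> \<le> real (card S) * P + sq * \<epsilon>"
      proof (rule add_mono)
        have "cmod (\<Sum>l\<in>S. ip L (Dblk L d D j u) (Dblk L d D l (xl l)))
              \<le> (\<Sum>l\<in>S. cmod (ip L (Dblk L d D j u) (Dblk L d D l (xl l))))" by (rule norm_sum)
        also have "\<dots> \<le> (\<Sum>l\<in>S. P)"
        proof (rule sum_mono)
          fix l assume l: "l \<in> S"
          have "cmod (ip L (Dblk L d D j u) (Dblk L d D l (xl l))) \<le> real d * \<mu> * (vnorm d u * vnorm d (xl l))"
            unfolding \<mu>_def using l SM jM jS dpos by (intro cross_bound) auto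
          also have "\<dots> \<le> real d * \<mu> * (1 * xmax)"
            using xmax_ge[OF l] mu0 unfolding un xl_def blocknorm_def by (intro mult_left_mono) auto
          finally show "cmod (ip L (Dblk L d D j u) (Dblk L d D l (xl l))) \<le> P" unfolding P_def by simp
        qed
        also have "\<dots> = real (card S) * P" by simp
        finally show "cmod (\<Sum>l\<in>S. ip L (Dblk L d D j u) (Dblk L d D l (xl l))) \<le> real (card S) * P" .
      next
        have "cmod (ip L (Dblk L d D j u) w) \<le> vnorm L (Dblk L d D j u) * vnorm L w" by (rule ip_CS)
        also have "\<dots> \<le> sq * \<epsilon>"
          using Dblk_norm[OF unit_cols jM, of u] noise vnorm_nonneg[of L w] sq0 vnorm_nonneg[of L "Dblk L d D j u"]
          unfolding sq_def un \<nu>_def by (intro mult_mono) auto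
        finally show "cmod (ip L (Dblk L d D j u) w) \<le> sq * \<epsilon>" .
      qed
      also have "\<dots> \<le> real k * P + sq * \<epsilon>" using sk P0 by (simp add: mult_right_mono)
      finally show ?thesis unfolding \<rho>_def .
    qed
  qed
  have sep: "rho L d D y j < rho L d D y i" if "i \<in> S" "j < M" "j \<notin> S" for i j
  proof -
    have "(2 * real k - 1) * real d * \<mu> * xmax = (real k - 1) * P + real k * P"
      unfolding P_def by (simp add: algebra_simps)
    moreover have "2 * \<epsilon> * sq = 2 * (sq * \<epsilon>)" by simp
    ultimately show ?thesis using low[OF that(1)] upp[OF that(2,3)] cond' by linarith
  qed
  have ShM: "Sh \<subseteq> {..<M}" and cSh: "card Sh = k"
    and selr: "\<And>i j. i \<in> Sh \<Longrightarrow> j \<in> {..<M} - Sh \<Longrightarrow> rho L d D y j \<le> rho L d D y i"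
    using sel unfolding bth_selection_def by auto
  have finSh: "finite Sh" using ShM finite_subset by blast
  have SSh: "S \<subseteq> Sh"
  proof (rule subsetI, rule ccontr)
    fix i assume iS: "i \<in> S" and iSh: "i \<notin> Sh"
    have "Sh \<subseteq> S"
    proof (rule subsetI, rule ccontr)
      fix j assume jSh: "j \<in> Sh" and jS: "j \<notin> S"
      have jM: "j < M" using jSh ShM by auto
      have "i \<in> {..<M} - Sh" using iS SM iSh by auto
      then have "rho L d D y i \<le> rho L d D y j" by (rule selr[OF jSh])
      then show False using sep[OF iS jM jS] by linarith
    qed
    moreover have "card S \<le> card Sh" using sk cSh by simp
    ultimately have "Sh = S" using finS card_mono[OF finS] by (intro card_subset_eq) (auto intro: le_antisym)
    then show False using iS iSh by simp
  qed
  define e where "e = (\<lambda>c. xh c - x c)"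
  have xhs: "supported_on M d Sh xh" using est unfolding bth_estimate_def by simp
  have xSh: "supported_on M d Sh x" using xsupp SSh unfolding supported_on_def by blast
  have es: "supported_on M d Sh e" using xhs xSh unfolding supported_on_def e_def by simp
  define De where "De = matvec L (M * d) D e"
  have De_eq: "De r = matvec L (M * d) D xh r - matvec L (M * d) D x r" for r
    unfolding De_def matvec_def e_def by (simp add: right_diff_distrib sum_subtractf)
  define av where "av = (\<lambda>r. y r - matvec L (M * d) D xh r)"
  have av_eq: "av = (\<lambda>r. w r - De r)" unfolding av_def obs De_eq by auto
  have minim: "(vnorm L av)^2 \<le> (vnorm L (\<lambda>r. av r - complex_of_real t * De r))^2" for t
  proof -
    define z where "z = (\<lambda>c. xh c + complex_of_real t * e c)"
    have zs: "supported_on M d Sh z" using xhs es unfolding supported_on_def z_def by simp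
    have "vnorm L av \<le> vnorm L (\<lambda>r. y r - matvec L (M * d) D z r)"
      using est zs unfolding bth_estimate_def av_def by blast
    also have "(\<lambda>r. y r - matvec L (M * d) D z r) = (\<lambda>r. av r - complex_of_real t * De r)"
      unfolding av_def De_def z_def matvec_def
      by (simp add: distrib_left sum.distrib sum_distrib_left mult.left_commute diff_diff_eq)
    finally show ?thesis by (intro power_mono vnorm_nonneg)
  qed
  define R where "R = Re (ip L av De)"
  define B where "B = (vnorm L De)^2"
  have B0: "0 \<le> B" unfolding B_def by simp
  have BW: "B \<le> \<epsilon>^2"
  proof (cases "B = 0")
    case True then show ?thesis by simp
  next
    case False
    then have Bpos: "0 < B" using B0 by linarith
    have "(vnorm L av)^2 \<le> (vnorm L av)^2 - 2 * (R / B) * R + (R / B)^2 * B"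
      using minim[of "R / B"] unfolding norm_expand R_def B_def .
    then have "R^2 / B \<le> 0" using Bpos by (simp add: power2_eq_square field_simps)
    then have "R^2 \<le> 0" using Bpos by (simp add: divide_le_0_iff)
    then have R0: "R = 0" by simp
    have "w = (\<lambda>r. av r - complex_of_real (-1) * De r)" unfolding av_eq by simp
    then have "(vnorm L w)^2 = (vnorm L av)^2 + 2 * R + B"
      using norm_expand[of L av "-1" De] unfolding R_def B_def by simp
    then have "B \<le> (vnorm L w)^2" using R0 by simp
    also have "\<dots> \<le> \<epsilon>^2" using noise vnorm_nonneg[of L w] by (intro power_mono) auto
    finally show ?thesis .
  qed
  define el where "el = (\<lambda>l. blk d e l)"
  define tl where "tl = (\<lambda>l. vnorm d (el l))"
  have De_blocks: "De = (\<lambda>r. \<Sum>l\<in>Sh. Dblk L d D l (el l) r)"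
    unfolding De_def el_def using matvec_blocks[OF es ShM] by auto
  have enorm: "(vnorm (M * d) e)^2 = (\<Sum>l\<in>Sh. (tl l)^2)"
    unfolding vnorm_blocks[OF es ShM] tl_def el_def blocknorm_def ..
  have "B = Re (\<Sum>i\<in>Sh. \<Sum>l\<in>Sh. ip L (Dblk L d D i (el i)) (Dblk L d D l (el l)))"
    unfolding B_def ip_self[symmetric] De_blocks ip_sum_left ip_sum_right ..
  also have "\<dots> = (\<Sum>i\<in>Sh. Re (ip L (Dblk L d D i (el i)) (Dblk L d D i (el i)))
      + (\<Sum>l\<in>Sh-{i}. Re (ip L (Dblk L d D i (el i)) (Dblk L d D l (el l)))))"
    unfolding Re_sum by (rule sum.cong[OF refl]) (simp add: sum.remove[OF finSh])
  also have "\<dots> \<ge> (\<Sum>i\<in>Sh. a0 * (tl i)^2 - (\<Sum>l\<in>Sh-{i}. real d * \<mu> * (tl i * tl l)))"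
  proof (rule sum_mono)
    fix i assume iSh: "i \<in> Sh"
    have iM: "i < M" using iSh ShM by auto
    have "a0 * (tl i)^2 \<le> Re (ip L (Dblk L d D i (el i)) (Dblk L d D i (el i)))"
      unfolding a0_def tl_def \<nu>_def by (rule quad_lower[OF unit_cols iM])
    moreover have "- (\<Sum>l\<in>Sh-{i}. real d * \<mu> * (tl i * tl l))
        \<le> (\<Sum>l\<in>Sh-{i}. Re (ip L (Dblk L d D i (el i)) (Dblk L d D l (el l))))"
    proof -
      have "(\<Sum>l\<in>Sh-{i}. - (real d * \<mu> * (tl i * tl l)))
          \<le> (\<Sum>l\<in>Sh-{i}. Re (ip L (Dblk L d D i (el i)) (Dblk L d D l (el l))))"
      proof (rule sum_mono)
        fix l assume l: "l \<in> Sh - {i}"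
        have "cmod (ip L (Dblk L d D i (el i)) (Dblk L d D l (el l))) \<le> real d * \<mu> * (tl i * tl l)"
          unfolding \<mu>_def tl_def using l ShM iM dpos by (intro cross_bound) auto
        then show "- (real d * \<mu> * (tl i * tl l)) \<le> Re (ip L (Dblk L d D i (el i)) (Dblk L d D l (el l)))"
          using abs_Re_le_cmod[of "ip L (Dblk L d D i (el i)) (Dblk L d D l (el l))"] by linarith
      qed
      then show ?thesis by (simp add: sum_negf)
    qed
    ultimately show "a0 * (tl i)^2 - (\<Sum>l\<in>Sh-{i}. real d * \<mu> * (tl i * tl l))
        \<le> Re (ip L (Dblk L d D i (el i)) (Dblk L d D i (el i)))
          + (\<Sum>l\<in>Sh-{i}. Re (ip L (Dblk L d D i (el i)) (Dblk L d D l (el l))))" by linarith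
  qed
  finally have B1: "(\<Sum>i\<in>Sh. a0 * (tl i)^2 - (\<Sum>l\<in>Sh-{i}. real d * \<mu> * (tl i * tl l))) \<le> B" .
  have "(\<Sum>i\<in>Sh. a0 * (tl i)^2 - (\<Sum>l\<in>Sh-{i}. real d * \<mu> * (tl i * tl l)))
      = a0 * (\<Sum>i\<in>Sh. (tl i)^2) - real d * \<mu> * (\<Sum>i\<in>Sh. \<Sum>l\<in>Sh-{i}. tl i * tl l)"
    by (simp add: sum_subtractf sum_distrib_left)
  moreover have "real d * \<mu> * (\<Sum>i\<in>Sh. \<Sum>l\<in>Sh-{i}. tl i * tl l)
      \<le> real d * \<mu> * ((real k - 1) * (\<Sum>i\<in>Sh. (tl i)^2))"
    using offdiag_bound[OF finSh, of tl] mu0 cSh unfolding tl_def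
    by (intro mult_left_mono) (auto simp: vnorm_nonneg)
  moreover have "(a0 - (real k - 1) * real d * \<mu>) * (\<Sum>i\<in>Sh. (tl i)^2)
      = a0 * (\<Sum>i\<in>Sh. (tl i)^2) - real d * \<mu> * ((real k - 1) * (\<Sum>i\<in>Sh. (tl i)^2))"
    by (simp add: algebra_simps)
  ultimately have "(a0 - (real k - 1) * real d * \<mu>) * (vnorm (M * d) e)^2 \<le> B"
    using B1 unfolding enorm by linarith
  then have "(a0 - (real k - 1) * real d * \<mu>) * (vnorm (M * d) e)^2 \<le> \<epsilon>^2" using BW by linarith
  then have "(vnorm (M * d) e)^2 \<le> \<epsilon>^2 / (a0 - (real k - 1) * real d * \<mu>)"
    using den_pos by (subst pos_le_divide_eq) (auto simp: mult.commute)
  then show ?thesis using SSh unfolding e_def a0_def \<nu>_def \<mu>_def S_def by simp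
qed

end
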